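(* Let $A\ge0$, $C_0,C_1>0$ and let $f$ be a multiplicative function with (i) $|f(p)|\le C_0$ for every prime $p$; (ii) $\sum_{n\le X}|f(n)|\le C_1X$ for all $X\ge1$; (iii) $\sum_{n\le X}|f(n)|^2\le C_1X(\log X)^A$ for all $X\ge2$. Let $g:\mathbb{N}\to\mathbb{R}$ be any function and $\epsilon>0$. Then for every integer $N\ge2$, $$\left|\sum_{1\le n\le N}f(n)e(g(n))\right|\ll\frac{N}{(\log N)^{1-\epsilon}}+\frac1{\log N}\left|\sum_{\substack{1\le np\le N}}f(n)f(p)(\log p)\,e(g(np))\right|,$$ where in the last sum $n$ ranges over positive integers and $p$ over primes, and the implied constant depends only on $\epsilon,A,C_0,C_1$.
   Context: $e(x)=\exp(2\pi ix)$. *)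

theory Defs
  imports "HOL-Analysis.Analysis" "HOL-Computational_Algebra.Primes"
begin

definition e :: "real \<Rightarrow> complex" where
  "e x = exp (2 * of_real pi * \<i> * of_real x)"

text \<open>Multiplicative arithmetic function (values at positive integers; f(0) is irrelevant).\<close>
definition multiplicative :: "(nat \<Rightarrow> complex) \<Rightarrow> bool" where
  "multiplicative f \<longleftrightarrow> f 1 = 1 \<and>
     (\<forall>m n. 0 < m \<longrightarrow> 0 < n \<longrightarrow> coprime m n \<longrightarrow> f (m * n) = f m * f n)"

end

theory Submission
  imports Defs
begin

lemma harm_bound: "1 \<le> n \<Longrightarrow> (\<Sum>k\<in>{1..n}. 1 / real k) \<le> 1 + ln (real n)"
proof (induction n rule: nat_induct_at_least)
  case base then show ?case by simp
next
  case (Suc n)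
  have "1/real (Suc n) \<le> ln (real (Suc n)) - ln (real n)"
  proof -
    have "ln (real n / real (Suc n)) \<le> real n / real (Suc n) - 1"
      using Suc by (intro ln_le_minus_one) auto
    moreover have "real n / real (Suc n) - 1 = - (1 / real (Suc n))" by (simp add: field_simps)
    moreover have "ln (real n / real (Suc n)) = ln (real n) - ln (real (Suc n))"
      using Suc by (simp add: ln_div)
    ultimately show ?thesis by linarith
  qed
  then show ?case using Suc by simp
qed

lemma tele_sq: "1 \<le> a \<Longrightarrow> (\<Sum>k\<in>{a<..b}. 1 / (real k)^2) \<le> 1 / real a"
proof -
  assume a: "1 \<le> a"
  have "a \<le> b \<Longrightarrow> (\<Sum>k\<in>{a<..b}. 1 / (real k)^2) \<le> 1 / real a - 1 / real b" for b
  proof (induction b rule: nat_induct_at_least)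
    case base then show ?case by simp
  next
    case (Suc b)
    have "{a<..Suc b} = insert (Suc b) {a<..b}" using Suc by auto
    then have "(\<Sum>k\<in>{a<..Suc b}. 1 / (real k)^2) = 1/(real (Suc b))^2 + (\<Sum>k\<in>{a<..b}. 1 / (real k)^2)"
      by simp
    moreover have "1/(real (Suc b))^2 \<le> 1/real b - 1/real (Suc b)"
    proof -
      have bpos: "real b > 0" using Suc a by simp
      have "1/real b - 1/real (Suc b) = 1/(real b * real (Suc b))" using bpos by (simp add: field_simps)
      moreover have "real b * real (Suc b) \<le> (real (Suc b))^2" by (simp add: power2_eq_square)
      moreover have "real b * real (Suc b) > 0" using bpos by simp
      ultimately show ?thesis by (simp add: frac_le)
    qed
    ultimately show ?case using Suc by linarith
  qed
  then show ?thesis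
    by (cases "a \<le> b") (auto, smt (verit) of_nat_0_le_iff divide_nonneg_nonneg)
qed

lemma cs_sum: fixes x :: "'a \<Rightarrow> real"
  shows "(\<Sum>i\<in>I. x i) \<le> sqrt (real (card I) * (\<Sum>i\<in>I. (x i)^2))"
  by (rule real_le_rsqrt) (use sum_squared_le_sum_of_squares[of x I] in \<open>simp add: mult.commute\<close>)

lemma card_multiples: "0 < d \<Longrightarrow> card {n\<in>{1..N::nat}. d dvd n} \<le> N div d"
proof -
  assume d: "0 < d"
  have "{n\<in>{1..N}. d dvd n} \<subseteq> (\<lambda>k. d*k) ` {1..N div d}"
  proof
    fix n assume n: "n \<in> {n\<in>{1..N}. d dvd n}"
    then obtain k where k: "n = d*k" by auto
    with n d have "k \<ge> 1" by (cases k) auto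
    moreover have "k \<le> N div d" using n k d by (metis mem_Collect_eq atLeastAtMost_iff div_le_mono nonzero_mult_div_cancel_left not_gr_zero)
    ultimately show "n \<in> (\<lambda>k. d*k) ` {1..N div d}" using k by auto
  qed
  then have "card {n\<in>{1..N}. d dvd n} \<le> card ((\<lambda>k. d*k) ` {1..N div d})"
    by (intro card_mono) auto
  also have "\<dots> \<le> N div d" using card_image_le[of "{1..N div d}" "\<lambda>k. d*k"] by simp
  finally show ?thesis .
qed

lemma ln_nat_decomp: "0 < (n::nat) \<Longrightarrow> ln (real n) = (\<Sum>p\<in>prime_factors n. real (multiplicity p n) * ln (real p))"
proof -
  assume n: "0 < n"
  have "real n = real (\<Prod>p\<in>prime_factors n. p ^ multiplicity p n)"
    using prod_prime_factors[of n] n by simp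
  also have "\<dots> = (\<Prod>p\<in>prime_factors n. real p ^ multiplicity p n)" by simp
  finally have "ln (real n) = ln (\<Prod>p\<in>prime_factors n. real p ^ multiplicity p n)" by simp
  also have "\<dots> = (\<Sum>p\<in>prime_factors n. ln (real p ^ multiplicity p n))"
    by (intro ln_prod) (auto dest: in_prime_factors_imp_prime prime_gt_0_nat)
  also have "\<dots> = (\<Sum>p\<in>prime_factors n. real (multiplicity p n) * ln (real p))"
    by (rule sum.cong) (auto simp: ln_realpow dest: in_prime_factors_imp_prime prime_gt_0_nat)
  finally show ?thesis .
qed

lemma card_pf_le: "0 < (n::nat) \<Longrightarrow> real (card (prime_factors n)) \<le> 2 * ln (real n)"
proof -
  assume n: "0 < n"
  have "(2::nat) ^ card (prime_factors n) = (\<Prod>p\<in>prime_factors n. 2)" by simp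
  also have "\<dots> \<le> (\<Prod>p\<in>prime_factors n. p)"
    by (intro prod_mono) (auto dest: in_prime_factors_imp_prime prime_ge_2_nat)
  also have "\<dots> \<le> (\<Prod>p\<in>prime_factors n. p ^ multiplicity p n)"
    by (intro prod_mono) (auto intro!: self_le_power simp: prime_factors_multiplicity dest: in_prime_factors_imp_prime prime_gt_0_nat)
  also have "\<dots> = n" using prod_prime_factors[of n] n by simp
  finally have le: "2 ^ card (prime_factors n) \<le> n" .
  have "real (card (prime_factors n)) * ln 2 = ln (2 ^ card (prime_factors n))"
    by (simp add: ln_realpow)
  also have "\<dots> \<le> ln (real n)"
  proof -
    have "real (2 ^ card (prime_factors n)) \<le> real n" using le by (simp only: of_nat_le_iff)
    then have "(2::real) ^ card (prime_factors n) \<le> real n" by simp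
    then show ?thesis by (intro ln_mono) auto
  qed
  finally have "real (card (prime_factors n)) * ln 2 \<le> ln (real n)" .
  moreover have "ln (2::real) \<ge> 1/2" using ln2_ge_two_thirds by simp
  moreover have "ln (real n) \<ge> 0" using n by simp
  moreover have "real (card (prime_factors n)) * (1/2) \<le> real (card (prime_factors n)) * ln 2"
    using \<open>ln (2::real) \<ge> 1/2\<close> by (intro mult_left_mono) auto
  ultimately show ?thesis by linarith
qed



locale setting =
  fixes f :: "nat \<Rightarrow> complex" and C0 C1 A :: real and N :: nat
  assumes mult: "multiplicative f"
    and fp: "\<And>p. prime p \<Longrightarrow> norm (f p) \<le> C0"
    and H1: "\<And>j. (\<Sum>n\<in>{1..j}. norm (f n)) \<le> C1 * real j"
    and H2: "\<And>j. 2 \<le> j \<Longrightarrow> (\<Sum>n\<in>{1..j}. (norm (f n))^2) \<le> C1 * real j * ln (real j) powr A"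
    and N2: "2 \<le> N" and A0: "0 \<le> A" and C1pos: "0 < C1"
begin

lemma fmul: "0 < m \<Longrightarrow> 0 < n \<Longrightarrow> coprime m n \<Longrightarrow> f (m*n) = f m * f n"
  using mult unfolding multiplicative_def by blast

lemma E1: "1 \<le> n \<Longrightarrow> (\<Sum>k\<in>{1..n}. norm (f k) * (ln (real n) - ln (real k))) \<le> C1 * real n"
proof (induction n rule: nat_induct_at_least)
  case base then show ?case using C1pos by simp
next
  case (Suc n)
  let ?d = "ln (real (Suc n)) - ln (real n)"
  have d0: "0 \<le> ?d" using Suc by simp
  have d1: "?d \<le> 1 / real n"
  proof -
    have "ln (real (Suc n) / real n) \<le> real (Suc n) / real n - 1"
      using Suc by (intro ln_le_minus_one) auto
    moreover have "real (Suc n) / real n - 1 = 1 / real n" using Suc by (simp add: field_simps)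
    ultimately show ?thesis using Suc by (simp add: ln_div)
  qed
  have "(\<Sum>k\<in>{1..Suc n}. norm (f k) * (ln (real (Suc n)) - ln (real k)))
      = (\<Sum>k\<in>{1..n}. norm (f k) * (ln (real n) - ln (real k))) + ?d * (\<Sum>k\<in>{1..n}. norm (f k))"
    by (simp add: algebra_simps sum.distrib sum_distrib_left sum_subtractf)
  also have "\<dots> \<le> C1 * real n + (1 / real n) * (C1 * real n)"
    using Suc.IH H1[of n] d0 d1 by (intro add_mono mult_mono) (auto intro: sum_nonneg)
  also have "\<dots> = C1 * real (Suc n)" using Suc by (simp add: field_simps)
  finally show ?case .
qed

lemma fpow: assumes p: "prime p" and j: "1 \<le> j"
  shows "norm (f (p^j)) \<le> sqrt (C1 * real p ^ j) * (real j * ln (real p)) powr (A/2)"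
proof -
  have p2: "2 \<le> p" using p prime_ge_2_nat by blast
  have pj: "2 \<le> p ^ j" using p2 j self_le_power[of p j] by linarith
  have "(norm (f (p^j)))^2 \<le> (\<Sum>n\<in>{1..p^j}. (norm (f n))^2)"
    by (rule member_le_sum) (use pj in auto)
  also have "\<dots> \<le> C1 * real (p^j) * ln (real (p^j)) powr A" using H2 pj by blast
  also have "ln (real (p^j)) = real j * ln (real p)" using p2 by (simp add: ln_realpow)
  finally have sq: "(norm (f (p^j)))^2 \<le> C1 * real p ^ j * (real j * ln (real p)) powr A" by simp
  have "norm (f (p^j)) = sqrt ((norm (f (p^j)))^2)" by simp
  also have "\<dots> \<le> sqrt (C1 * real p ^ j * (real j * ln (real p)) powr A)" using sq by (rule real_sqrt_le_mono)
  also have "\<dots> = sqrt (C1 * real p ^ j) * sqrt ((real j * ln (real p)) powr A)" by (simp add: real_sqrt_mult)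
  also have "sqrt ((real j * ln (real p)) powr A) = (real j * ln (real p)) powr (A/2)"
    by (simp add: powr_powr flip: powr_half_sqrt)
  finally show ?thesis .
qed

lemma Vsum: assumes p: "prime p"
  shows "(\<Sum>n\<in>{1..N}. if multiplicity p n = j then norm (f n) else 0) \<le> norm (f (p^j)) * (C1 * real (N div p^j))"
proof -
  have p0: "0 < p" using p prime_gt_0_nat by blast
  let ?S = "{n\<in>{1..N}. multiplicity p n = j}"
  let ?M = "{m\<in>{1..N div p^j}. \<not> p dvd m}"
  have eq: "(\<Sum>n\<in>{1..N}. if multiplicity p n = j then norm (f n) else 0) = (\<Sum>n\<in>?S. norm (f n))"
    by (rule sum.inter_filter[symmetric]) simp
  have sub: "?S \<subseteq> (\<lambda>m. p^j*m) ` ?M"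
  proof
    fix n assume n: "n \<in> ?S"
    obtain y where y: "n = p ^ multiplicity p n * y" "\<not> p dvd y" by (rule multiplicity_decompose'[of n p]) (use n p not_prime_unit in auto)
    have yn: "n = p^j * y" using y n by simp
    have "y \<noteq> 0" using yn n by auto
    moreover have "y \<le> N div p^j" using yn n p0
      by (subst less_eq_div_iff_mult_less_eq) (auto simp: mult.commute)
    ultimately show "n \<in> (\<lambda>m. p^j*m) ` ?M" using yn y(2) by auto
  qed
  have "(\<Sum>n\<in>?S. norm (f n)) \<le> (\<Sum>n\<in>(\<lambda>m. p^j*m) ` ?M. norm (f n))"
    by (intro sum_mono2 sub) auto
  also have "\<dots> = (\<Sum>m\<in>?M. norm (f (p^j*m)))"
    using p0 by (subst sum.reindex) (auto simp: inj_on_def)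
  also have "\<dots> = (\<Sum>m\<in>?M. norm (f (p^j)) * norm (f m))"
  proof (rule sum.cong[OF refl])
    fix m assume m: "m \<in> ?M"
    have "coprime p m" using m p prime_imp_coprime by auto
    then have "coprime (p^j) m" by simp
    then show "norm (f (p^j*m)) = norm (f (p^j)) * norm (f m)"
      using m p0 by (simp add: fmul norm_mult)
  qed
  also have "\<dots> = norm (f (p^j)) * (\<Sum>m\<in>?M. norm (f m))" by (simp add: sum_distrib_left)
  also have "\<dots> \<le> norm (f (p^j)) * (\<Sum>m\<in>{1..N div p^j}. norm (f m))"
    by (intro mult_left_mono sum_mono2) auto
  also have "\<dots> \<le> norm (f (p^j)) * (C1 * real (N div p^j))"
    by (intro mult_left_mono H1) auto
  finally show ?thesis using eq by simp
qed

end


lemma norm_e [simp]: "norm (e x) = 1"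
  unfolding e_def by simp

lemma split_helper: "b = w + r \<Longrightarrow> of_real a * (c::complex) = c * of_real (a - b) + c * of_real w + c * of_real r"
  by (simp add: algebra_simps)

lemma mult_le_iff: "prime (p::nat) \<Longrightarrow> n \<noteq> 0 \<Longrightarrow> p ^ k dvd n \<longleftrightarrow> k \<le> multiplicity p n"
  by (rule power_dvd_iff_le_multiplicity) (auto simp: not_prime_unit)

context setting begin

definition R :: "nat \<Rightarrow> real" where
  "R n = (\<Sum>p\<in>{p\<in>prime_factors n. 2 \<le> multiplicity p n}. real (multiplicity p n) * ln (real p))"

lemma R_nonneg: "0 \<le> R n"
  unfolding R_def
proof (intro sum_nonneg mult_nonneg_nonneg)
  fix p assume "p \<in> {p\<in>prime_factors n. 2 \<le> multiplicity p n}"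
  then have "prime p" by (simp only: mem_Collect_eq in_prime_factors_iff)
  then have "1 \<le> real p" using prime_ge_1_nat by simp
  then show "0 \<le> ln (real p)" by simp
qed simp

lemma ln_split: assumes n: "0 < n"
  shows "ln (real n) = (\<Sum>p\<in>{p\<in>prime_factors n. multiplicity p n = 1}. ln (real p)) + R n"
proof -
  have U: "prime_factors n = {p\<in>prime_factors n. multiplicity p n = 1} \<union> {p\<in>prime_factors n. 2 \<le> multiplicity p n}"
    by (auto simp: prime_factors_multiplicity)
  have "ln (real n) = (\<Sum>p\<in>prime_factors n. real (multiplicity p n) * ln (real p))"
    using ln_nat_decomp n by blast
  also have "\<dots> = (\<Sum>p\<in>{p\<in>prime_factors n. multiplicity p n = 1}. real (multiplicity p n) * ln (real p)) + R n"
    unfolding R_def by (subst U, subst sum.union_disjoint) auto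
  also have "(\<Sum>p\<in>{p\<in>prime_factors n. multiplicity p n = 1}. real (multiplicity p n) * ln (real p))
     = (\<Sum>p\<in>{p\<in>prime_factors n. multiplicity p n = 1}. ln (real p))" by (rule sum.cong) auto
  finally show ?thesis .
qed

lemma S1_sum:
  "(\<Sum>(m,p)\<in>{(m,p). 1 \<le> m \<and> prime p \<and> m*p \<le> N \<and> \<not> p dvd m}. f m * f p * of_real (ln (real p)) * e (g (m*p)))
   = (\<Sum>n\<in>{1..N}. f n * e (g n) * of_real (\<Sum>p\<in>{p\<in>prime_factors n. multiplicity p n = 1}. ln (real p)))"
proof -
  let ?F = "\<lambda>n. {p\<in>prime_factors n. multiplicity p n = 1}"
  have "(\<Sum>n\<in>{1..N}. f n * e (g n) * of_real (\<Sum>p\<in>?F n. ln (real p)))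
      = (\<Sum>n\<in>{1..N}. \<Sum>p\<in>?F n. f n * e (g n) * of_real (ln (real p)))"
    by (simp add: sum_distrib_left)
  also have "\<dots> = (\<Sum>(n,p)\<in>Sigma {1..N} ?F. f n * e (g n) * of_real (ln (real p)))"
    by (rule sum.Sigma) auto
  finally have eq: "(\<Sum>n\<in>{1..N}. f n * e (g n) * of_real (\<Sum>p\<in>?F n. ln (real p)))
      = (\<Sum>(n,p)\<in>Sigma {1..N} ?F. f n * e (g n) * of_real (ln (real p)))" .
  have "(\<Sum>(m,p)\<in>{(m,p). 1 \<le> m \<and> prime p \<and> m*p \<le> N \<and> \<not> p dvd m}. f m * f p * of_real (ln (real p)) * e (g (m*p)))
      = (\<Sum>(n,p)\<in>Sigma {1..N} ?F. f n * e (g n) * of_real (ln (real p)))"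
  proof (rule sum.reindex_bij_witness[where i = "\<lambda>(n,p). (n div p, p)" and j = "\<lambda>(m,p). (m*p, p)"])
    fix a assume "a \<in> {(m,p). 1 \<le> m \<and> prime p \<and> m*p \<le> N \<and> \<not> p dvd m}"
    then obtain m p where a: "a = (m,p)" "1 \<le> m" "prime p" "m*p \<le> N" "\<not> p dvd m" by auto
    have p0: "0 < p" using a prime_gt_0_nat by blast
    show "(case case a of (m, p) \<Rightarrow> (m * p, p) of (n, p) \<Rightarrow> (n div p, p)) = a" using a p0 by simp
    have m1: "multiplicity p (m*p) = 1"
      by (rule multiplicity_decomposeI[where x' = m]) (use a p0 in auto)
    have "p \<in> prime_factors (m*p)" using a p0 by (auto simp: in_prime_factors_iff)
    moreover have "1 \<le> m*p" using a p0 by simp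
    ultimately show "(case a of (m, p) \<Rightarrow> (m * p, p)) \<in> Sigma {1..N} ?F" using a m1 by auto
    have "coprime m p" using a prime_imp_coprime coprime_commute by blast
    then have "f (m*p) = f m * f p" using a p0 by (intro fmul) auto
    then show "(case case a of (m, p) \<Rightarrow> (m * p, p) of (n, p) \<Rightarrow> f n * e (g n) * complex_of_real (ln (real p)))
         = (case a of (m, p) \<Rightarrow> f m * f p * complex_of_real (ln (real p)) * e (g (m * p)))"
      using a by (simp add: algebra_simps)
  next
    fix b assume "b \<in> Sigma {1..N} ?F"
    then obtain n p where b: "b = (n,p)" "1 \<le> n" "n \<le> N" "p \<in> prime_factors n" "multiplicity p n = 1" by auto
    have p: "prime p" "p dvd n" using b by (auto simp: in_prime_factors_iff)
    have p0: "0 < p" using p prime_gt_0_nat by blast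
    show "(case case b of (n, p) \<Rightarrow> (n div p, p) of (m, p) \<Rightarrow> (m * p, p)) = b" using b p by simp
    have nd: "n div p * p = n" using p by simp
    have "\<not> p dvd n div p"
    proof
      assume "p dvd n div p"
      then have "p^2 dvd n" using nd by (metis dvd_mult_right mult_dvd_mono dvd_refl power2_eq_square)
      then have "2 \<le> multiplicity p n" using mult_le_iff[of p n 2] p b by auto
      then show False using b by simp
    qed
    moreover have "1 \<le> n div p"
    proof (rule ccontr)
      assume "\<not> 1 \<le> n div p"
      then have "n div p = 0" by simp
      then show False using nd b by simp
    qed
    ultimately show "(case b of (n, p) \<Rightarrow> (n div p, p)) \<in> {(m,p). 1 \<le> m \<and> prime p \<and> m*p \<le> N \<and> \<not> p dvd m}"
      using b p nd by auto
  qed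
  with eq show ?thesis by simp
qed

lemma decomp:
  "norm (of_real (ln (real N)) * (\<Sum>n\<in>{1..N}. f n * e (g n))
      - (\<Sum>(n,p)\<in>{(n,p). 1 \<le> n \<and> prime p \<and> n*p \<le> N}. f n * f p * of_real (ln (real p)) * e (g (n*p))))
   \<le> (\<Sum>n\<in>{1..N}. norm (f n) * (ln (real N) - ln (real n))) + (\<Sum>n\<in>{1..N}. norm (f n) * R n)
     + (\<Sum>(m,p)\<in>{(m,p). 1 \<le> m \<and> prime p \<and> m*p \<le> N \<and> p dvd m}. norm (f m) * norm (f p) * ln (real p))"
proof -
  let ?S = "{(n,p). 1 \<le> n \<and> prime p \<and> n*p \<le> N}"
  let ?S1 = "{(m,p). 1 \<le> m \<and> prime p \<and> m*p \<le> N \<and> \<not> p dvd m}"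
  let ?S2 = "{(m,p). 1 \<le> m \<and> prime p \<and> m*p \<le> N \<and> p dvd m}"
  let ?t = "\<lambda>(n,p). f n * f p * of_real (ln (real p)) * e (g (n*p))"
  let ?W = "\<lambda>n. (\<Sum>p\<in>{p\<in>prime_factors n. multiplicity p n = 1}. ln (real p))"
  have sub: "?S \<subseteq> {1..N} \<times> {1..N}"
  proof
    fix x assume "x \<in> ?S"
    then obtain n p where x: "x = (n,p)" "1 \<le> n" "prime p" "n*p \<le> N" by auto
    have "1 \<le> p" using x prime_ge_1_nat by blast
    then have "n \<le> N" "p \<le> N" using x(2,4) by (metis le_trans mult_le_mono2 mult_1_right, metis le_trans mult_le_mono1 mult_1)
    then show "x \<in> {1..N} \<times> {1..N}" using x \<open>1 \<le> p\<close> by auto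
  qed
  then have finS: "finite ?S" by (rule finite_subset) auto
  have U: "?S = ?S1 \<union> ?S2" by auto
  have finS1: "finite ?S1" by (rule finite_subset[OF _ finS]) auto
  have finS2: "finite ?S2" by (rule finite_subset[OF _ finS]) auto
  have T: "(\<Sum>x\<in>?S. ?t x) = (\<Sum>x\<in>?S1. ?t x) + (\<Sum>x\<in>?S2. ?t x)"
    by (subst U, rule sum.union_disjoint[OF finS1 finS2]) auto
  have T1: "(\<Sum>x\<in>?S1. ?t x) = (\<Sum>n\<in>{1..N}. f n * e (g n) * of_real (?W n))"
    using S1_sum by simp
  have L: "of_real (ln (real N)) * (\<Sum>n\<in>{1..N}. f n * e (g n))
     = (\<Sum>n\<in>{1..N}. f n * e (g n) * of_real (ln (real N) - ln (real n)))
       + (\<Sum>n\<in>{1..N}. f n * e (g n) * of_real (?W n)) + (\<Sum>n\<in>{1..N}. f n * e (g n) * of_real (R n))"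
  proof -
    have "of_real (ln (real N)) * (\<Sum>n\<in>{1..N}. f n * e (g n))
        = (\<Sum>n\<in>{1..N}. f n * e (g n) * of_real (ln (real N) - ln (real n))
           + f n * e (g n) * of_real (?W n) + f n * e (g n) * of_real (R n))"
      unfolding sum_distrib_left
    proof (rule sum.cong[OF refl])
      fix n assume "n \<in> {1..N}"
      then have "ln (real n) = ?W n + R n" using ln_split by auto
      then show "of_real (ln (real N)) * (f n * e (g n)) = f n * e (g n) * of_real (ln (real N) - ln (real n))
           + f n * e (g n) * of_real (?W n) + f n * e (g n) * of_real (R n)"
        by (rule split_helper)
    qed
    then show ?thesis by (simp add: sum.distrib)
  qed
  have "of_real (ln (real N)) * (\<Sum>n\<in>{1..N}. f n * e (g n)) - (\<Sum>x\<in>?S. ?t x)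
      = (\<Sum>n\<in>{1..N}. f n * e (g n) * of_real (ln (real N) - ln (real n)))
        + (\<Sum>n\<in>{1..N}. f n * e (g n) * of_real (R n)) - (\<Sum>x\<in>?S2. ?t x)"
    using L T T1 by simp
  then have "norm (of_real (ln (real N)) * (\<Sum>n\<in>{1..N}. f n * e (g n)) - (\<Sum>x\<in>?S. ?t x))
      \<le> norm (\<Sum>n\<in>{1..N}. f n * e (g n) * of_real (ln (real N) - ln (real n)))
        + norm (\<Sum>n\<in>{1..N}. f n * e (g n) * of_real (R n)) + norm (\<Sum>x\<in>?S2. ?t x)"
    by (metis (no_types, lifting) norm_triangle_ineq4 norm_triangle_ineq order_trans add_right_mono)
  also have "\<dots> \<le> (\<Sum>n\<in>{1..N}. norm (f n) * (ln (real N) - ln (real n))) + (\<Sum>n\<in>{1..N}. norm (f n) * R n)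
     + (\<Sum>(m,p)\<in>?S2. norm (f m) * norm (f p) * ln (real p))"
  proof (intro add_mono)
    show "norm (\<Sum>n\<in>{1..N}. f n * e (g n) * of_real (ln (real N) - ln (real n)))
        \<le> (\<Sum>n\<in>{1..N}. norm (f n) * (ln (real N) - ln (real n)))"
    proof (rule order_trans[OF norm_sum sum_mono])
      fix n assume n: "n \<in> {1..N}"
      then have "ln (real n) \<le> ln (real N)" by simp
      then have "norm (of_real (ln (real N) - ln (real n)) :: complex) = ln (real N) - ln (real n)"
        by (simp only: norm_of_real)
      then show "norm (f n * e (g n) * of_real (ln (real N) - ln (real n))) \<le> norm (f n) * (ln (real N) - ln (real n))"
        by (simp add: norm_mult)
    qed
    show "norm (\<Sum>n\<in>{1..N}. f n * e (g n) * of_real (R n)) \<le> (\<Sum>n\<in>{1..N}. norm (f n) * R n)"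
    proof (rule order_trans[OF norm_sum sum_mono])
      fix n assume n: "n \<in> {1..N}"
      show "norm (f n * e (g n) * of_real (R n)) \<le> norm (f n) * R n"
        using R_nonneg[of n] by (simp add: norm_mult)
    qed
    show "norm (\<Sum>x\<in>?S2. ?t x) \<le> (\<Sum>(m,p)\<in>?S2. norm (f m) * norm (f p) * ln (real p))"
    proof (rule order_trans[OF norm_sum sum_mono])
      fix x assume "x \<in> ?S2"
      then obtain m p where x: "x = (m,p)" "prime p" by auto
      then have "1 \<le> real p" using prime_ge_1_nat by simp
      then show "norm (?t x) \<le> (case x of (m,p) \<Rightarrow> norm (f m) * norm (f p) * ln (real p))"
        using x by (simp add: norm_mult)
    qed
  qed
  finally show ?thesis by simp
qed

end


lemma Hsum: assumes "1 \<le> P"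
  shows "(\<Sum>p\<in>{p. prime p \<and> p \<le> P}. ln (real p) / real p) \<le> ln (real P) * (1 + ln (real P))"
proof -
  have sub: "{p. prime p \<and> p \<le> P} \<subseteq> {1..P}" using prime_ge_1_nat by auto
  have "(\<Sum>p\<in>{p. prime p \<and> p \<le> P}. ln (real p) / real p) \<le> (\<Sum>p\<in>{p. prime p \<and> p \<le> P}. ln (real P) * (1 / real p))"
  proof (rule sum_mono)
    fix p assume p: "p \<in> {p. prime p \<and> p \<le> P}"
    then have "1 \<le> p" using prime_ge_1_nat by auto
    then have "ln (real p) \<le> ln (real P)" using p by simp
    then show "ln (real p) / real p \<le> ln (real P) * (1 / real p)" using \<open>1 \<le> p\<close> by (simp add: divide_right_mono)
  qed
  also have "\<dots> \<le> (\<Sum>p\<in>{1..P}. ln (real P) * (1 / real p))"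
    by (rule sum_mono2) (use sub assms in auto)
  also have "\<dots> = ln (real P) * (\<Sum>p\<in>{1..P}. 1 / real p)" by (simp add: sum_distrib_left)
  also have "\<dots> \<le> ln (real P) * (1 + ln (real P))"
    using harm_bound[OF assms] assms by (intro mult_left_mono) auto
  finally show ?thesis .
qed

context setting begin

lemma C0nn: "0 \<le> C0"
  using fp[of 2] by (metis norm_ge_zero order_trans two_is_prime_nat)

lemma H2N: "(\<Sum>n\<in>{1..N}. (norm (f n))^2) \<le> C1 * real N * ln (real N) powr A"
  using H2 N2 by blast

lemma E2bound: assumes P1: "1 \<le> P"
  shows "(\<Sum>(m,p)\<in>{(m,p). 1 \<le> m \<and> prime p \<and> m*p \<le> N \<and> p dvd m}. norm (f m) * norm (f p) * ln (real p))
    \<le> C0 * (C1 * real N * (ln (real P) * (1 + ln (real P))))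
      + C0 * (ln (real N) * sqrt (real N / real P * (2 * ln (real N) * (C1 * real N * ln (real N) powr A))))"
proof -
  let ?S2 = "{(m,p). 1 \<le> m \<and> prime p \<and> m*p \<le> N \<and> p dvd m}"
  let ?S2s = "{(m,p). 1 \<le> m \<and> prime p \<and> m*p \<le> N \<and> p dvd m \<and> p \<le> P}"
  let ?S2l = "{(m,p). 1 \<le> m \<and> prime p \<and> m*p \<le> N \<and> p dvd m \<and> P < p}"
  let ?Pset = "{p. prime p \<and> p \<le> P}"
  let ?L = "ln (real N)"
  have sub: "?S2 \<subseteq> {1..N} \<times> {1..N}"
  proof
    fix x assume "x \<in> ?S2"
    then obtain n p where x: "x = (n,p)" "1 \<le> n" "prime p" "n*p \<le> N" by auto
    have "1 \<le> p" using x prime_ge_1_nat by blast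
    then have "n \<le> N" "p \<le> N" using x(2,4) by (metis le_trans mult_le_mono2 mult_1_right, metis le_trans mult_le_mono1 mult_1)
    then show "x \<in> {1..N} \<times> {1..N}" using x \<open>1 \<le> p\<close> by auto
  qed
  then have fin: "finite ?S2" by (rule finite_subset) auto
  have fins: "finite ?S2s" by (rule finite_subset[OF _ fin]) auto
  have finl: "finite ?S2l" by (rule finite_subset[OF _ fin]) auto
  have finP: "finite ?Pset" by (rule finite_subset[of _ "{..P}"]) auto
  have step1: "(\<Sum>(m,p)\<in>?S2. norm (f m) * norm (f p) * ln (real p)) \<le> (\<Sum>(m,p)\<in>?S2. C0 * (norm (f m) * ln (real p)))"
  proof (rule sum_mono)
    fix x assume "x \<in> ?S2"
    then obtain m p where x: "x = (m,p)" "prime p" by auto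
    then have "0 \<le> ln (real p)" using prime_ge_1_nat by simp
    show "(case x of (m,p) \<Rightarrow> norm (f m) * norm (f p) * ln (real p)) \<le> (case x of (m,p) \<Rightarrow> C0 * (norm (f m) * ln (real p)))"
    proof -
      have "norm (f m) * norm (f p) * ln (real p) \<le> norm (f m) * C0 * ln (real p)"
        using fp[of p] x \<open>0 \<le> ln (real p)\<close> by (intro mult_right_mono mult_left_mono) auto
      then show ?thesis using x by (simp add: mult_ac)
    qed
  qed
  have U: "?S2 = ?S2s \<union> ?S2l" by auto
  have split: "(\<Sum>(m,p)\<in>?S2. norm (f m) * ln (real p)) = (\<Sum>(m,p)\<in>?S2s. norm (f m) * ln (real p)) + (\<Sum>(m,p)\<in>?S2l. norm (f m) * ln (real p))"
    by (subst U, rule sum.union_disjoint[OF fins finl]) auto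
  have small: "(\<Sum>(m,p)\<in>?S2s. norm (f m) * ln (real p)) \<le> C1 * real N * (ln (real P) * (1 + ln (real P)))"
  proof -
    let ?Sig = "{(m,p). p \<in> ?Pset \<and> m \<in> {1..N div p}}"
    have finSig: "finite ?Sig"
      by (rule finite_subset[of _ "{1..N} \<times> ?Pset"]) (use finP in \<open>auto intro: order_trans[OF _ div_le_dividend]\<close>)
    have "(\<Sum>(m,p)\<in>?S2s. norm (f m) * ln (real p)) \<le> (\<Sum>(m,p)\<in>?Sig. norm (f m) * ln (real p))"
    proof (rule sum_mono2[OF finSig])
      show "?S2s \<subseteq> ?Sig"
      proof
        fix x assume "x \<in> ?S2s"
        then obtain m p where x: "x = (m,p)" "1 \<le> m" "prime p" "m*p \<le> N" "p \<le> P" by auto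
        have "0 < p" using x prime_gt_0_nat by blast
        then have "m \<le> N div p" using x by (subst less_eq_div_iff_mult_less_eq) auto
        then show "x \<in> ?Sig" using x by auto
      qed
    next
      fix x assume "x \<in> ?Sig - ?S2s"
      then show "0 \<le> (case x of (m,p) \<Rightarrow> norm (f m) * ln (real p))"
        using prime_ge_1_nat by (auto intro!: mult_nonneg_nonneg)
    qed
    also have "\<dots> = (\<Sum>(p,m)\<in>Sigma ?Pset (\<lambda>p. {1..N div p}). norm (f m) * ln (real p))"
      by (rule sum.reindex_bij_witness[where i = prod.swap and j = prod.swap]) auto
    also have "\<dots> = (\<Sum>p\<in>?Pset. \<Sum>m\<in>{1..N div p}. norm (f m) * ln (real p))"
      by (rule sum.Sigma[symmetric]) (use finP in auto)
    also have "\<dots> \<le> (\<Sum>p\<in>?Pset. C1 * real N * (ln (real p) / real p))"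
    proof (rule sum_mono)
      fix p assume p: "p \<in> ?Pset"
      then have p0: "0 < p" and lp: "0 \<le> ln (real p)" using prime_gt_0_nat prime_ge_1_nat by auto
      have "(\<Sum>m\<in>{1..N div p}. norm (f m) * ln (real p)) = ln (real p) * (\<Sum>m\<in>{1..N div p}. norm (f m))"
        by (simp add: sum_distrib_left mult.commute)
      also have "\<dots> \<le> ln (real p) * (C1 * real (N div p))" using H1 lp by (intro mult_left_mono) auto
      also have "\<dots> \<le> ln (real p) * (C1 * (real N / real p))"
        using lp C1pos of_nat_div_le_of_nat[of N p] by (intro mult_left_mono) auto
      also have "\<dots> = C1 * real N * (ln (real p) / real p)" by simp
      finally show "(\<Sum>m\<in>{1..N div p}. norm (f m) * ln (real p)) \<le> C1 * real N * (ln (real p) / real p)" .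
    qed
    also have "\<dots> = C1 * real N * (\<Sum>p\<in>?Pset. ln (real p) / real p)" by (simp add: sum_distrib_left)
    also have "\<dots> \<le> C1 * real N * (ln (real P) * (1 + ln (real P)))"
      using Hsum[OF P1] C1pos by (intro mult_left_mono) auto
    finally show ?thesis .
  qed
  have large: "(\<Sum>(m,p)\<in>?S2l. norm (f m) * ln (real p))
     \<le> ln (real N) * sqrt (real N / real P * (2 * ln (real N) * (C1 * real N * ln (real N) powr A)))"
  proof -
    have "(\<Sum>(m,p)\<in>?S2l. norm (f m) * ln (real p)) \<le> (\<Sum>(m,p)\<in>?S2l. ?L * norm (f m))"
    proof (rule sum_mono)
      fix x assume "x \<in> ?S2l"
      then obtain m p where x: "x = (m,p)" "1 \<le> m" "prime p" "m*p \<le> N" by auto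
      have "p \<le> N" using x by (metis le_trans mult_le_mono1 mult_1)
      moreover have "0 < p" using x prime_gt_0_nat by blast
      ultimately have "ln (real p) \<le> ?L" by simp
      then show "(case x of (m,p) \<Rightarrow> norm (f m) * ln (real p)) \<le> (case x of (m,p) \<Rightarrow> ?L * norm (f m))"
        using x by (simp add: mult_left_mono mult.commute)
    qed
    also have "\<dots> = ?L * (\<Sum>x\<in>?S2l. norm (f (fst x)))"
      by (simp add: sum_distrib_left case_prod_beta)
    also have "\<dots> \<le> ?L * sqrt (real (card ?S2l) * (\<Sum>x\<in>?S2l. (norm (f (fst x)))^2))"
      using N2 by (intro mult_left_mono cs_sum) auto
    also have "\<dots> \<le> ?L * sqrt (real N / real P * (2 * ?L * (C1 * real N * ?L powr A)))"
    proof (intro mult_left_mono real_sqrt_le_mono mult_mono)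
      let ?Q = "{p. prime p \<and> P < p \<and> p \<le> N}"
      have finQ: "finite ?Q" by (rule finite_subset[of _ "{..N}"]) auto
      have subU: "?S2l \<subseteq> (\<Union>p\<in>?Q. (\<lambda>k. (k*p, p)) ` {1..N div p^2})"
      proof
        fix x assume "x \<in> ?S2l"
        then obtain m p where x: "x = (m,p)" "1 \<le> m" "prime p" "m*p \<le> N" "p dvd m" "P < p" by auto
        obtain k where k: "m = p*k" using x by auto
        have p0: "0 < p" using x prime_gt_0_nat by blast
        have "1 \<le> k" using k x by (cases k) auto
        moreover have "k \<le> N div p^2" using x k p0
          by (subst less_eq_div_iff_mult_less_eq) (auto simp: power2_eq_square algebra_simps)
        moreover have "p \<le> N" using x by (metis le_trans mult_le_mono1 mult_1)
        ultimately show "x \<in> (\<Union>p\<in>?Q. (\<lambda>k. (k*p, p)) ` {1..N div p^2})" using x k by (auto simp: mult.commute)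
      qed
      have "card ?S2l \<le> card (\<Union>p\<in>?Q. (\<lambda>k. (k*p, p)) ` {1..N div p^2})"
        by (rule card_mono[OF _ subU]) (use finQ in auto)
      also have "\<dots> \<le> (\<Sum>p\<in>?Q. card ((\<lambda>k. (k*p, p)) ` {1..N div p^2}))" by (rule card_UN_le[OF finQ])
      also have "\<dots> \<le> (\<Sum>p\<in>?Q. N div p^2)" by (intro sum_mono card_image_le[THEN order_trans]) auto
      finally have c0: "card ?S2l \<le> (\<Sum>p\<in>?Q. N div p^2)" .
      have "real (card ?S2l) \<le> real (\<Sum>p\<in>?Q. N div p^2)" using c0 by (rule of_nat_mono)
      also have "\<dots> = (\<Sum>p\<in>?Q. real (N div p^2))" by (rule of_nat_sum)
      also have "\<dots> \<le> (\<Sum>p\<in>?Q. real N * (1 / (real p)^2))"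
      proof (rule sum_mono)
        fix p assume "p \<in> ?Q"
        have "real (N div p^2) \<le> real N / real (p^2)" by (rule of_nat_div_le_of_nat)
        then show "real (N div p^2) \<le> real N * (1 / (real p)^2)" by simp
      qed
      also have "\<dots> \<le> (\<Sum>p\<in>{P<..N}. real N * (1 / (real p)^2))"
        by (rule sum_mono2) auto
      also have "\<dots> = real N * (\<Sum>p\<in>{P<..N}. 1 / (real p)^2)" by (simp add: sum_distrib_left)
      also have "\<dots> \<le> real N * (1 / real P)" using tele_sq[OF P1] by (intro mult_left_mono) auto
      finally show "real (card ?S2l) \<le> real N / real P" by simp
      have subS: "?S2l \<subseteq> Sigma {1..N} prime_factors"
      proof
        fix x assume "x \<in> ?S2l"
        then obtain m p where x: "x = (m,p)" "1 \<le> m" "prime p" "m*p \<le> N" "p dvd m" by auto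
        have "m \<le> N" using x prime_ge_1_nat by (metis le_trans mult_le_mono2 mult_1_right)
        then show "x \<in> Sigma {1..N} prime_factors" using x by (auto simp: in_prime_factors_iff)
      qed
      have "(\<Sum>x\<in>?S2l. (norm (f (fst x)))^2) \<le> (\<Sum>x\<in>Sigma {1..N} prime_factors. (norm (f (fst x)))^2)"
        by (rule sum_mono2[OF _ subS]) auto
      also have "\<dots> = (\<Sum>m\<in>{1..N}. \<Sum>p\<in>prime_factors m. (norm (f m))^2)"
        by (subst sum.Sigma) (auto simp: case_prod_beta)
      also have "\<dots> = (\<Sum>m\<in>{1..N}. real (card (prime_factors m)) * (norm (f m))^2)" by simp
      also have "\<dots> \<le> (\<Sum>m\<in>{1..N}. (2 * ?L) * (norm (f m))^2)"
      proof (rule sum_mono)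
        fix m assume m: "m \<in> {1..N}"
        have "real (card (prime_factors m)) \<le> 2 * ln (real m)" using card_pf_le m by auto
        also have "\<dots> \<le> 2 * ?L" using m by simp
        finally show "real (card (prime_factors m)) * (norm (f m))^2 \<le> (2 * ?L) * (norm (f m))^2"
          by (rule mult_right_mono) simp
      qed
      also have "\<dots> = 2 * ?L * (\<Sum>m\<in>{1..N}. (norm (f m))^2)" by (simp add: sum_distrib_left)
      also have "\<dots> \<le> 2 * ?L * (C1 * real N * ?L powr A)" using H2N N2 by (intro mult_left_mono) auto
      finally show "(\<Sum>x\<in>?S2l. (norm (f (fst x)))^2) \<le> 2 * ?L * (C1 * real N * ?L powr A)" .
    qed (use N2 in \<open>auto intro: sum_nonneg\<close>)
    finally show ?thesis .
  qed
  have "(\<Sum>(m,p)\<in>?S2. norm (f m) * norm (f p) * ln (real p)) \<le> C0 * (\<Sum>(m,p)\<in>?S2. norm (f m) * ln (real p))"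
    using step1 by (simp add: sum_distrib_left case_prod_beta)
  also have "\<dots> \<le> C0 * (C1 * real N * (ln (real P) * (1 + ln (real P)))
      + ln (real N) * sqrt (real N / real P * (2 * ln (real N) * (C1 * real N * ln (real N) powr A))))"
    using split small large C0nn by (intro mult_left_mono) auto
  finally show ?thesis by (simp add: distrib_left)
qed

end


lemma Qsum: assumes P1: "1 \<le> P"
  shows "(\<Sum>p\<in>{p. prime p \<and> P < p \<and> p \<le> N}. real (N div p^2)) \<le> real N / real P"
proof -
  let ?Q = "{p. prime p \<and> P < p \<and> p \<le> N}"
  have "(\<Sum>p\<in>?Q. real (N div p^2)) \<le> (\<Sum>p\<in>?Q. real N * (1 / (real p)^2))"
  proof (rule sum_mono)
    fix p assume "p \<in> ?Q"
    have "real (N div p^2) \<le> real N / real (p^2)" by (rule of_nat_div_le_of_nat)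
    then show "real (N div p^2) \<le> real N * (1 / (real p)^2)" by simp
  qed
  also have "\<dots> \<le> (\<Sum>p\<in>{P<..N}. real N * (1 / (real p)^2))"
    by (rule sum_mono2) auto
  also have "\<dots> = real N * (\<Sum>p\<in>{P<..N}. 1 / (real p)^2)" by (simp add: sum_distrib_left)
  also have "\<dots> \<le> real N * (1 / real P)" using tele_sq[OF P1] by (intro mult_left_mono) auto
  finally show ?thesis by simp
qed

context setting begin

lemma R_le_ln: "0 < n \<Longrightarrow> R n \<le> ln (real n)"
proof -
  assume n: "0 < n"
  have "0 \<le> (\<Sum>p\<in>{p\<in>prime_factors n. multiplicity p n = 1}. ln (real p))"
  proof (rule sum_nonneg)
    fix p assume "p \<in> {p\<in>prime_factors n. multiplicity p n = 1}"
    then have "prime p" by (simp only: mem_Collect_eq in_prime_factors_iff)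
    then have "1 \<le> real p" using prime_ge_1_nat by simp
    then show "0 \<le> ln (real p)" by simp
  qed
  then show ?thesis using ln_split[OF n] by linarith
qed

lemma per_p: assumes p: "prime p" "p \<le> P" and P1: "1 \<le> P"
  shows "(\<Sum>n\<in>{1..N}. norm (f n) * (if 2 \<le> multiplicity p n \<and> multiplicity p n < J then real (multiplicity p n) * ln (real p) else 0))
    \<le> real J * (real J * (sqrt C1 * C1 * (real J * ln (real P)) powr (A/2)) * real N * (ln (real p) / real p))"
proof -
  let ?K0 = "sqrt C1 * C1 * (real J * ln (real P)) powr (A/2)"
  have p2: "2 \<le> p" using p prime_ge_2_nat by blast
  have lp: "0 \<le> ln (real p)" using p2 by simp
  have "(\<Sum>n\<in>{1..N}. norm (f n) * (if 2 \<le> multiplicity p n \<and> multiplicity p n < J then real (multiplicity p n) * ln (real p) else 0))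
     = (\<Sum>n\<in>{1..N}. \<Sum>j\<in>{2..<J}. if multiplicity p n = j then real j * ln (real p) * norm (f n) else 0)"
    by (rule sum.cong[OF refl], subst sum.delta') auto
  also have "\<dots> = (\<Sum>j\<in>{2..<J}. \<Sum>n\<in>{1..N}. if multiplicity p n = j then real j * ln (real p) * norm (f n) else 0)"
    by (rule sum.swap)
  also have "\<dots> = (\<Sum>j\<in>{2..<J}. real j * ln (real p) * (\<Sum>n\<in>{1..N}. if multiplicity p n = j then norm (f n) else 0))"
    unfolding sum_distrib_left by (intro sum.cong refl) simp
  also have "\<dots> \<le> (\<Sum>j\<in>{2..<J}. real J * ?K0 * real N * (ln (real p) / real p))"
  proof (rule sum_mono)
    fix j assume j: "j \<in> {2..<J}"
    have pj: "real p ^ 2 \<le> real p ^ j" using j p2 by (intro power_increasing) auto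
    have pjpos: "0 < real p ^ j" using p2 by simp
    have sq: "real p \<le> sqrt (real p ^ j)"
      using real_sqrt_le_mono[OF pj] p2 by simp
    have lP: "ln (real p) \<le> ln (real P)" using p p2 by simp
    have jl: "real j * ln (real p) \<le> real J * ln (real P)"
      using j lP lp by (intro mult_mono) auto
    have pw: "(real j * ln (real p)) powr (A/2) \<le> (real J * ln (real P)) powr (A/2)"
      using jl lp A0 by (intro powr_mono2) auto
    have fb: "norm (f (p^j)) \<le> sqrt C1 * sqrt (real p ^ j) * (real J * ln (real P)) powr (A/2)"
    proof -
      have "norm (f (p^j)) \<le> sqrt (C1 * real p ^ j) * (real j * ln (real p)) powr (A/2)"
        using fpow[OF p(1)] j by auto
      also have "\<dots> \<le> sqrt (C1 * real p ^ j) * (real J * ln (real P)) powr (A/2)"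
        using pw C1pos by (intro mult_left_mono) auto
      finally show ?thesis by (simp add: real_sqrt_mult)
    qed
    have nd: "C1 * real (N div p^j) \<le> C1 * (real N / real p ^ j)"
      using of_nat_div_le_of_nat[of N "p^j"] C1pos by (intro mult_left_mono) auto
    have V: "(\<Sum>n\<in>{1..N}. if multiplicity p n = j then norm (f n) else 0) \<le> norm (f (p^j)) * (C1 * real (N div p^j))"
      by (rule Vsum[OF p(1)])
    also have "\<dots> \<le> (sqrt C1 * sqrt (real p ^ j) * (real J * ln (real P)) powr (A/2)) * (C1 * (real N / real p ^ j))"
      by (rule mult_mono[OF fb nd]) (use C1pos in auto)
    also have "\<dots> = ?K0 * real N * (sqrt (real p ^ j) / real p ^ j)" by (simp add: field_simps)
    also have "\<dots> \<le> ?K0 * real N * (1 / real p)"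
    proof (intro mult_left_mono)
      have "sqrt (real p ^ j) / real p ^ j = 1 / sqrt (real p ^ j)"
        using pjpos by (simp add: field_simps)
      also have "\<dots> \<le> 1 / real p" using sq p2 by (intro divide_left_mono) auto
      finally show "sqrt (real p ^ j) / real p ^ j \<le> 1 / real p" .
    qed (use C1pos in auto)
    finally have V2: "(\<Sum>n\<in>{1..N}. if multiplicity p n = j then norm (f n) else 0) \<le> ?K0 * real N * (1 / real p)" .
    have "real j * ln (real p) * (\<Sum>n\<in>{1..N}. if multiplicity p n = j then norm (f n) else 0)
        \<le> real J * ln (real p) * (?K0 * real N * (1 / real p))"
      using V2 j lp by (intro mult_mono) (auto intro: sum_nonneg)
    then show "real j * ln (real p) * (\<Sum>n\<in>{1..N}. if multiplicity p n = j then norm (f n) else 0)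
        \<le> real J * ?K0 * real N * (ln (real p) / real p)" by (simp add: field_simps)
  qed
  also have "\<dots> = real (J - 2) * (real J * ?K0 * real N * (ln (real p) / real p))" by simp
  also have "\<dots> \<le> real J * (real J * ?K0 * real N * (ln (real p) / real p))"
    using lp p2 C1pos by (intro mult_right_mono) (auto intro!: mult_nonneg_nonneg)
  finally show ?thesis .
qed

end


context setting begin

lemma E3bound: assumes P1: "1 \<le> P" and J1: "1 \<le> J"
  shows "(\<Sum>n\<in>{1..N}. norm (f n) * R n)
    \<le> real J * real J * (sqrt C1 * C1 * (real J * ln (real P)) powr (A/2)) * real N * (ln (real P) * (1 + ln (real P)))
      + ln (real N) * sqrt ((real N / real P + real P * real N / 2^J) * (C1 * real N * ln (real N) powr A))"
proof -
  let ?K0 = "sqrt C1 * C1 * (real J * ln (real P)) powr (A/2)"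
  let ?L = "ln (real N)"
  let ?Pset = "{p. prime p \<and> p \<le> P}"
  let ?Q = "{p. prime p \<and> P < p \<and> p \<le> N}"
  have finP: "finite ?Pset" by (rule finite_subset[of _ "{..P}"]) auto
  have finQ: "finite ?Q" by (rule finite_subset[of _ "{..N}"]) auto
  define B where "B = {n\<in>{1..N}. (\<exists>p. prime p \<and> P < p \<and> p^2 dvd n) \<or> (\<exists>p. prime p \<and> p \<le> P \<and> p^J dvd n)}"
  define c where "c = (\<lambda>p n. if 2 \<le> multiplicity p n \<and> multiplicity p n < J then real (multiplicity p n) * ln (real p) else 0)"
  define Rg where "Rg = (\<lambda>n. \<Sum>p\<in>?Pset. c p n)"
  have c_nn: "p \<in> ?Pset \<Longrightarrow> 0 \<le> c p n" for p n
    unfolding c_def using prime_ge_1_nat[of p] by auto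
  have Rg_nn: "0 \<le> Rg n" for n unfolding Rg_def by (intro sum_nonneg c_nn)
  have pw: "R n \<le> Rg n + (if n \<in> B then ?L else 0)" if n: "n \<in> {1..N}" for n
  proof (cases "n \<in> B")
    case True
    have "R n \<le> ln (real n)" using R_le_ln n by auto
    also have "\<dots> \<le> ?L" using n by simp
    finally show ?thesis using True Rg_nn[of n] by simp
  next
    case False
    let ?A1 = "{p\<in>prime_factors n. 2 \<le> multiplicity p n}"
    have n0: "n \<noteq> 0" using n by auto
    have A1: "p \<in> ?Pset \<and> multiplicity p n < J" if p: "p \<in> ?A1" for p
    proof -
      have pr: "prime p" using p by (simp only: mem_Collect_eq in_prime_factors_iff)
      have "p^2 dvd n" using p pr n0 mult_le_iff[of p n 2] by auto
      then have "p \<le> P" using False pr n unfolding B_def by (auto simp: not_less)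
      moreover have "multiplicity p n < J"
      proof (rule ccontr)
        assume "\<not> multiplicity p n < J"
        then have "p^J dvd n" using pr n0 mult_le_iff[of p n J] by auto
        then show False using False pr \<open>p \<le> P\<close> n unfolding B_def by auto
      qed
      ultimately show ?thesis using pr by auto
    qed
    have "Rg n = (\<Sum>p\<in>?A1. c p n)"
      unfolding Rg_def
    proof (rule sum.mono_neutral_right[OF finP])
      show "?A1 \<subseteq> ?Pset" using A1 by blast
      show "\<forall>i\<in>?Pset - ?A1. c i n = 0"
      proof
        fix i assume i: "i \<in> ?Pset - ?A1"
        show "c i n = 0"
        proof (cases "i \<in> prime_factors n")
          case True then show ?thesis using i unfolding c_def by auto
        next
          case False
          then have "\<not> i dvd n" using i n0 by (auto simp: in_prime_factors_iff)
          then have "multiplicity i n = 0" by (simp add: not_dvd_imp_multiplicity_0)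
          then show ?thesis unfolding c_def by simp
        qed
      qed
    qed
    also have "\<dots> = R n" unfolding R_def c_def by (rule sum.cong) (use A1 in auto)
    finally show ?thesis using False by simp
  qed
  have "(\<Sum>n\<in>{1..N}. norm (f n) * R n) \<le> (\<Sum>n\<in>{1..N}. norm (f n) * Rg n + norm (f n) * (if n \<in> B then ?L else 0))"
  proof (rule sum_mono)
    fix n assume n: "n \<in> {1..N}"
    have "norm (f n) * R n \<le> norm (f n) * (Rg n + (if n \<in> B then ?L else 0))"
      using pw[OF n] by (rule mult_left_mono) simp
    then show "norm (f n) * R n \<le> norm (f n) * Rg n + norm (f n) * (if n \<in> B then ?L else 0)"
      by (simp add: distrib_left)
  qed
  also have "\<dots> = (\<Sum>n\<in>{1..N}. norm (f n) * Rg n) + (\<Sum>n\<in>{1..N}. norm (f n) * (if n \<in> B then ?L else 0))"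
    by (rule sum.distrib)
  also have "\<dots> \<le> real J * real J * ?K0 * real N * (ln (real P) * (1 + ln (real P)))
      + ?L * sqrt ((real N / real P + real P * real N / 2^J) * (C1 * real N * ?L powr A))"
  proof (rule add_mono)
    have "(\<Sum>n\<in>{1..N}. norm (f n) * Rg n) = (\<Sum>p\<in>?Pset. \<Sum>n\<in>{1..N}. norm (f n) * c p n)"
      unfolding Rg_def sum_distrib_left by (rule sum.swap)
    also have "\<dots> \<le> (\<Sum>p\<in>?Pset. real J * real J * ?K0 * real N * (ln (real p) / real p))"
    proof (rule sum_mono)
      fix p assume p: "p \<in> ?Pset"
      show "(\<Sum>n\<in>{1..N}. norm (f n) * c p n) \<le> real J * real J * ?K0 * real N * (ln (real p) / real p)"
        using per_p[of p P J] p P1 unfolding c_def by (simp add: mult_ac)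
    qed
    also have "\<dots> = real J * real J * ?K0 * real N * (\<Sum>p\<in>?Pset. ln (real p) / real p)"
      by (simp add: sum_distrib_left)
    also have "\<dots> \<le> real J * real J * ?K0 * real N * (ln (real P) * (1 + ln (real P)))"
      using Hsum[OF P1] C1pos by (intro mult_left_mono) auto
    finally show "(\<Sum>n\<in>{1..N}. norm (f n) * Rg n) \<le> real J * real J * ?K0 * real N * (ln (real P) * (1 + ln (real P)))" .
  next
    have BN: "B \<subseteq> {1..N}" unfolding B_def by auto
    have finB: "finite B" using BN finite_subset by blast
    have "(\<Sum>n\<in>{1..N}. norm (f n) * (if n \<in> B then ?L else 0)) = ?L * (\<Sum>n\<in>B. norm (f n))"
    proof -
      have "(\<Sum>n\<in>{1..N}. norm (f n) * (if n \<in> B then ?L else 0)) = (\<Sum>n\<in>{1..N}. if n \<in> B then ?L * norm (f n) else 0)"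
        by (rule sum.cong) auto
      also have "\<dots> = (\<Sum>n\<in>{1..N} \<inter> B. ?L * norm (f n))" by (simp add: sum.inter_restrict)
      also have "{1..N} \<inter> B = B" using BN by auto
      finally show ?thesis by (simp add: sum_distrib_left)
    qed
    also have "\<dots> \<le> ?L * sqrt (real (card B) * (\<Sum>n\<in>B. (norm (f n))^2))"
      using N2 by (intro mult_left_mono cs_sum) auto
    also have "\<dots> \<le> ?L * sqrt ((real N / real P + real P * real N / 2^J) * (C1 * real N * ?L powr A))"
    proof (intro mult_left_mono real_sqrt_le_mono mult_mono)
      have subB: "B \<subseteq> (\<Union>p\<in>?Q. {n\<in>{1..N}. p^2 dvd n}) \<union> (\<Union>p\<in>?Pset. {n\<in>{1..N}. p^J dvd n})"
      proof
        fix n assume "n \<in> B"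
        then have n: "n \<in> {1..N}" and d: "(\<exists>p. prime p \<and> P < p \<and> p^2 dvd n) \<or> (\<exists>p. prime p \<and> p \<le> P \<and> p^J dvd n)"
          unfolding B_def by auto
        from d show "n \<in> (\<Union>p\<in>?Q. {n\<in>{1..N}. p^2 dvd n}) \<union> (\<Union>p\<in>?Pset. {n\<in>{1..N}. p^J dvd n})"
        proof
          assume "\<exists>p. prime p \<and> P < p \<and> p^2 dvd n"
          then obtain p where p: "prime p" "P < p" "p^2 dvd n" by auto
          have "p \<le> p^2" using p by (simp add: power2_eq_square)
          also have "p^2 \<le> n" using p n by (intro dvd_imp_le) auto
          finally have "p \<le> N" using n by auto
          then show ?thesis using p n by auto
        next
          assume "\<exists>p. prime p \<and> p \<le> P \<and> p^J dvd n"
          then show ?thesis using n by auto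
        qed
      qed
      have "card B \<le> card ((\<Union>p\<in>?Q. {n\<in>{1..N}. p^2 dvd n}) \<union> (\<Union>p\<in>?Pset. {n\<in>{1..N}. p^J dvd n}))"
        by (rule card_mono[OF _ subB]) auto
      also have "\<dots> \<le> card (\<Union>p\<in>?Q. {n\<in>{1..N}. p^2 dvd n}) + card (\<Union>p\<in>?Pset. {n\<in>{1..N}. p^J dvd n})"
        by (rule card_Un_le)
      also have "\<dots> \<le> (\<Sum>p\<in>?Q. card {n\<in>{1..N}. p^2 dvd n}) + (\<Sum>p\<in>?Pset. card {n\<in>{1..N}. p^J dvd n})"
        by (intro add_mono card_UN_le finQ finP)
      also have "\<dots> \<le> (\<Sum>p\<in>?Q. N div p^2) + (\<Sum>p\<in>?Pset. N div p^J)"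
        by (intro add_mono sum_mono card_multiples) (auto dest: prime_gt_0_nat)
      finally have c0: "card B \<le> (\<Sum>p\<in>?Q. N div p^2) + (\<Sum>p\<in>?Pset. N div p^J)" .
      have "real (card B) \<le> real ((\<Sum>p\<in>?Q. N div p^2) + (\<Sum>p\<in>?Pset. N div p^J))" using c0 by (rule of_nat_mono)
      also have "\<dots> = (\<Sum>p\<in>?Q. real (N div p^2)) + (\<Sum>p\<in>?Pset. real (N div p^J))" by simp
      also have "\<dots> \<le> real N / real P + real P * real N / 2^J"
      proof (rule add_mono)
        show "(\<Sum>p\<in>?Q. real (N div p^2)) \<le> real N / real P" by (rule Qsum[OF P1])
        have "(\<Sum>p\<in>?Pset. real (N div p^J)) \<le> (\<Sum>p\<in>?Pset. real N / 2^J)"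
        proof (rule sum_mono)
          fix p assume p: "p \<in> ?Pset"
          then have p2J: "(2::real)^J \<le> real p ^ J" using prime_ge_2_nat[of p] by (intro power_mono) auto
          moreover have "real (N div p^J) \<le> real N / real (p^J)" by (rule of_nat_div_le_of_nat)
          moreover have "real N / real (p^J) \<le> real N / 2^J"
            using p2J p prime_gt_0_nat[of p] by (intro divide_left_mono) auto
          ultimately show "real (N div p^J) \<le> real N / 2^J" by linarith
        qed
        also have "\<dots> = real (card ?Pset) * (real N / 2^J)" by simp
        also have "\<dots> \<le> real P * (real N / 2^J)"
        proof (rule mult_right_mono)
          have "card ?Pset \<le> card {1..P}" by (rule card_mono) (use prime_ge_1_nat in auto)
          then show "real (card ?Pset) \<le> real P" by simp
        qed simp
        finally show "(\<Sum>p\<in>?Pset. real (N div p^J)) \<le> real P * real N / 2^J" by simp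
      qed
      finally show "real (card B) \<le> real N / real P + real P * real N / 2^J" .
      have "(\<Sum>n\<in>B. (norm (f n))^2) \<le> (\<Sum>n\<in>{1..N}. (norm (f n))^2)" by (rule sum_mono2[OF _ BN]) auto
      also have "\<dots> \<le> C1 * real N * ?L powr A" by (rule H2N)
      finally show "(\<Sum>n\<in>B. (norm (f n))^2) \<le> C1 * real N * ?L powr A" .
    qed (use N2 in \<open>auto intro: sum_nonneg\<close>)
    finally show "(\<Sum>n\<in>{1..N}. norm (f n) * (if n \<in> B then ?L else 0))
       \<le> ?L * sqrt ((real N / real P + real P * real N / 2^J) * (C1 * real N * ?L powr A))" .
  qed
  finally show ?thesis by simp
qed

end


lemma nat_ceil_bounds: "0 \<le> (x::real) \<Longrightarrow> x \<le> real (nat \<lceil>x\<rceil>) \<and> real (nat \<lceil>x\<rceil>) \<le> x + 1"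
proof -
  assume x: "0 \<le> x"
  have "real (nat \<lceil>x\<rceil>) = of_int \<lceil>x\<rceil>" using x by simp
  moreover have "of_int \<lceil>x\<rceil> < x + 1" using ceiling_correct[of x] by linarith
  ultimately show ?thesis using real_nat_ceiling_ge[of x] by linarith
qed

lemma sqrt_helper: fixes L X c rN :: real
  assumes "0 \<le> L" "0 \<le> X" "0 \<le> c" "0 \<le> rN" "L^2 * X \<le> c * rN^2"
  shows "L * sqrt X \<le> rN * sqrt c"
proof -
  have "L * sqrt X = sqrt (L^2 * X)" using assms by (simp add: real_sqrt_mult)
  also have "\<dots> \<le> sqrt (c * rN^2)" using assms by (intro real_sqrt_le_mono)
  also have "\<dots> = rN * sqrt c" using assms by (simp add: real_sqrt_mult)
  finally show ?thesis .
qed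

lemma PJ_facts:
  fixes A L :: real and P J :: nat
  assumes A0: "0 \<le> A" and L: "2/3 \<le> L"
    and Pdef: "P = nat \<lceil>(L+4) powr (A+3)\<rceil>" and Jdef: "J = nat \<lceil>3*(A+3)*log 2 (L+4)\<rceil>"
  shows "1 \<le> ln (L+4)" "(L+4) powr (A+3) \<le> real P" "real P \<le> 2 * (L+4) powr (A+3)" "1 \<le> P"
    "0 \<le> ln (real P)" "ln (real P) \<le> (A+4) * ln (L+4)"
    "1 \<le> J" "real J \<le> (5*(A+3)+1) * ln (L+4)" "(L+4) powr (3*(A+3)) \<le> 2^J"
proof -
  let ?M = "L+4" and ?a = "A+3"
  have M4: "4 \<le> ?M" using L by linarith
  have l2: "2/3 \<le> ln (2::real)" by (rule ln2_ge_two_thirds)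
  have "ln (4::real) = 2 * ln 2" using ln_realpow[of 2 2] by simp
  then have "ln (4::real) \<ge> 4/3" using l2 by linarith
  moreover have "ln (4::real) \<le> ln ?M" using M4 by simp
  ultimately show lM: "1 \<le> ln ?M" by linarith
  have y1: "1 \<le> ?M powr ?a" using M4 A0 by (intro ge_one_powr_ge_zero) auto
  have Pb: "?M powr ?a \<le> real P \<and> real P \<le> ?M powr ?a + 1" using nat_ceil_bounds[of "?M powr ?a"] y1 Pdef by auto
  then show Pge: "?M powr ?a \<le> real P" by blast
  show Ple: "real P \<le> 2 * ?M powr ?a" using Pb y1 by linarith
  show P1: "1 \<le> P" using Pge y1 by linarith
  show "0 \<le> ln (real P)" using P1 by simp
  have "ln (real P) \<le> ln (2 * ?M powr ?a)" using Ple P1 by (subst ln_le_cancel_iff) auto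
  also have "\<dots> = ln 2 + ?a * ln ?M" using M4 by (simp add: ln_mult)
  also have "\<dots> \<le> (A+4) * ln ?M" using lM ln_2_less_1 by (simp add: algebra_simps)
  finally show "ln (real P) \<le> (A+4) * ln ?M" .
  let ?x = "3*?a*log 2 ?M"
  have lg: "log 2 ?M = ln ?M / ln 2" by (simp add: log_def)
  have x0: "0 < ?x" using lM A0 lg l2 by (auto intro!: mult_pos_pos divide_pos_pos)
  from nat_ceil_bounds[of ?x] x0 Jdef have Jge: "?x \<le> real J" and Jle: "real J \<le> ?x + 1" by auto
  show "1 \<le> J" using Jge x0 by (cases J) auto
  have "?x = 3*?a*(ln ?M / ln 2)" using lg by simp
  also have "\<dots> \<le> 3*?a*(ln ?M * (3/2))"
  proof -
    have "ln ?M / ln 2 \<le> ln ?M / (2/3)" using l2 lM by (intro divide_left_mono) auto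
    then show ?thesis using A0 by (intro mult_left_mono) auto
  qed
  finally have "real J \<le> 3*?a*(ln ?M * (3/2)) + 1" using Jle by linarith
  moreover have "0 \<le> A * ln ?M" using lM A0 by simp
  moreover have "3*?a*(ln ?M * (3/2)) + 1 = (9/2)*(A*ln ?M) + (27/2)*ln ?M + 1" by (simp add: algebra_simps)
  moreover have "(5*?a+1)*ln ?M = 5*(A*ln ?M) + 16*ln ?M" by (simp add: algebra_simps)
  ultimately show "real J \<le> (5*?a+1) * ln ?M" using lM by linarith
  have "?M powr (3*?a) = (2 powr log 2 ?M) powr (3*?a)" using M4 by simp
  also have "\<dots> = 2 powr ?x" by (simp add: powr_powr mult_ac)
  also have "\<dots> \<le> 2 powr (real J)" using Jge by simp
  also have "\<dots> = 2^J" by (simp add: powr_realpow)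
  finally show "?M powr (3*?a) \<le> 2^J" .
qed

definition Kc :: "real \<Rightarrow> real \<Rightarrow> real \<Rightarrow> real" where
  "Kc A C0 C1 = C1 + C0* sqrt(2*C1) + sqrt(2*C1) + C0*C1*((A+4)*(A+5))
     + (5*(A+3)+1)^2 * (sqrt C1 * C1 * ((5*(A+3)+1)*(A+4)) powr (A/2)) * ((A+4)*(A+5))"

definition Kf :: "real \<Rightarrow> real \<Rightarrow> real \<Rightarrow> real \<Rightarrow> real" where
  "Kf A C0 C1 \<epsilon> = Kc A C0 C1 * ((A+4)/\<epsilon>) powr (A+4) * 7 powr \<epsilon>"

lemma lam_bound: fixes A \<epsilon> L :: real
  assumes A0: "0 \<le> A" and ep: "0 < \<epsilon>" and L: "2/3 \<le> L"
  shows "ln (L+4) powr (A+4) \<le> ((A+4)/\<epsilon>) powr (A+4) * 7 powr \<epsilon> * L powr \<epsilon>"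
proof -
  let ?M = "L+4" and ?B = "A+4"
  define d where "d = \<epsilon> / ?B"
  have d0: "0 < d" using ep A0 unfolding d_def by simp
  have l0: "0 \<le> ln ?M" using L by simp
  have "ln ?M \<le> ?M powr d / d" using L d0 by (intro ln_powr_bound) auto
  then have "ln ?M powr ?B \<le> (?M powr d / d) powr ?B" using l0 A0 by (intro powr_mono2) auto
  also have "\<dots> = ?M powr (d * ?B) / d powr ?B" using L d0 by (simp add: powr_divide powr_powr)
  also have "d * ?B = \<epsilon>" unfolding d_def using A0 by simp
  also have "?M powr \<epsilon> / d powr ?B = (?B/\<epsilon>) powr ?B * ?M powr \<epsilon>"
    using d0 ep A0 unfolding d_def by (simp add: powr_divide field_simps)
  also have "?M powr \<epsilon> \<le> (7 * L) powr \<epsilon>" using L ep by (intro powr_mono2) auto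
  also have "(7 * L) powr \<epsilon> = 7 powr \<epsilon> * L powr \<epsilon>" using L by (simp add: powr_mult)
  finally show ?thesis using A0 ep by (simp add: mult_left_mono mult_ac)
qed


lemma asym:
  fixes A C0 C1 \<epsilon> L rN :: real and P J :: nat
  assumes A0: "0 \<le> A" and C0: "0 \<le> C0" and C1: "0 < C1" and ep: "0 < \<epsilon>" and L: "2/3 \<le> L" and rN: "0 \<le> rN"
    and Pdef: "P = nat \<lceil>(L+4) powr (A+3)\<rceil>" and Jdef: "J = nat \<lceil>3*(A+3)*log 2 (L+4)\<rceil>"
  shows "C1 * rN
     + ((real J * real J * (sqrt C1 * C1 * (real J * ln (real P)) powr (A/2)) * rN * (ln (real P) * (1 + ln (real P)))
         + L * sqrt ((rN / real P + real P * rN / 2^J) * (C1 * rN * L powr A)))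
       + (C0 * (C1 * rN * (ln (real P) * (1 + ln (real P))))
         + C0 * (L * sqrt (rN / real P * (2 * L * (C1 * rN * L powr A))))))
     \<le> Kf A C0 C1 \<epsilon> * rN * L powr \<epsilon>"
proof -
  let ?M = "L+4" and ?a = "A+3"
  define lam where "lam = ln ?M"
  define y where "y = ?M powr ?a"
  define lP where "lP = ln (real P)"
  note F = PJ_facts[OF A0 L Pdef Jdef]
  have lam1: "1 \<le> lam" using F(1) unfolding lam_def .
  have yP: "y \<le> real P" using F(2) unfolding y_def .
  have P1: "1 \<le> P" using F(4) .
  have lP0: "0 \<le> lP" and lPb: "lP \<le> (A+4) * lam" using F(5,6) unfolding lP_def lam_def by auto
  have J1: "1 \<le> J" and Jb: "real J \<le> (5*?a+1) * lam" using F(7,8) unfolding lam_def by auto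
  have J2: "?M powr (3*?a) \<le> 2^J" using F(9) .
  have L0: "0 < L" using L by linarith
  have M4: "4 \<le> ?M" using L by linarith
  have LM: "L \<le> ?M" by simp
  have y4: "?M \<le> y"
  proof -
    have "?M powr 1 \<le> ?M powr ?a" by (rule powr_mono) (use A0 M4 in auto)
    then show ?thesis unfolding y_def using M4 by simp
  qed
  have ypos: "0 < y" using y4 M4 by linarith
  have T2b: "L * sqrt (rN / real P * (2 * L * (C1 * rN * L powr A))) \<le> rN * sqrt (2*C1)"
  proof (rule sqrt_helper)
    have l3: "L powr (A+3) = L powr A * L^3"
      using powr_realpow[of L 3] L0 by (simp add: powr_add)
    have e: "L^2 * (rN / real P * (2 * L * (C1 * rN * L powr A))) = (2*C1) * rN^2 * (L powr (A+3) / real P)"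
      unfolding l3 by (simp add: power2_eq_square power3_eq_cube field_simps)
    have "L powr (A+3) \<le> ?M powr (A+3)" using L0 A0 by (intro powr_mono2) auto
    moreover have "0 < real P" using yP ypos by linarith
    ultimately have "L powr (A+3) / real P \<le> 1" using yP unfolding y_def by (simp add: divide_le_eq_1)
    then have h: "(2*C1) * rN^2 * (L powr (A+3) / real P) \<le> (2*C1) * rN^2 * 1"
      using C1 by (intro mult_left_mono) auto
    have "L^2 * (rN / real P * (2 * L * (C1 * rN * L powr A))) = (2*C1) * rN^2 * (L powr (A+3) / real P)" by (rule e)
    also have "\<dots> \<le> (2*C1) * rN^2 * 1" by (rule h)
    finally show "L^2 * (rN / real P * (2 * L * (C1 * rN * L powr A))) \<le> (2*C1) * rN^2" by simp
  qed (use L0 C1 rN in auto)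
  have T3b: "L * sqrt ((rN / real P + real P * rN / 2^J) * (C1 * rN * L powr A)) \<le> rN * sqrt (2*C1)"
  proof (rule sqrt_helper)
    have l2: "L powr (A+2) = L powr A * L^2"
      using powr_realpow[of L 2] L0 by (simp add: powr_add)
    have e: "L^2 * ((rN / real P + real P * rN / 2^J) * (C1 * rN * L powr A))
        = C1 * rN^2 * (L powr (A+2) * (1 / real P + real P / 2^J))"
      unfolding l2 by (simp add: power2_eq_square field_simps)
    have M3: "?M powr (3*?a) = y * y * y" unfolding y_def
      by (simp flip: powr_add)
    have q1: "1 / real P \<le> 1 / y" using yP ypos by (intro divide_left_mono) auto
    have "real P / 2^J \<le> real P / (y*y*y)" using J2 M3 ypos P1 by (intro divide_left_mono) auto
    also have "\<dots> \<le> 2*y / (y*y*y)" using F(3) ypos unfolding y_def by (intro divide_right_mono) auto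
    also have "\<dots> = 2 / (y*y)" using ypos by (simp add: field_simps)
    also have "\<dots> \<le> 1 / y" using y4 M4 ypos by (simp add: field_simps)
    finally have q2: "real P / 2^J \<le> 1 / y" .
    have "L powr (A+2) \<le> ?M powr (A+2)" using L0 A0 by (intro powr_mono2) auto
    also have "\<dots> \<le> y" unfolding y_def using M4 by simp
    finally have Ly: "L powr (A+2) \<le> y" .
    have "L powr (A+2) * (1 / real P + real P / 2^J) \<le> y * (2 / y)"
      using q1 q2 Ly P1 ypos by (intro mult_mono) auto
    also have "\<dots> = 2" using ypos by simp
    finally have h: "C1 * rN^2 * (L powr (A+2) * (1 / real P + real P / 2^J)) \<le> C1 * rN^2 * 2"
      using C1 by (intro mult_left_mono) auto
    have "L^2 * ((rN / real P + real P * rN / 2^J) * (C1 * rN * L powr A)) = C1 * rN^2 * (L powr (A+2) * (1 / real P + real P / 2^J))" by (rule e)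
    also have "\<dots> \<le> C1 * rN^2 * 2" by (rule h)
    finally show "L^2 * ((rN / real P + real P * rN / 2^J) * (C1 * rN * L powr A)) \<le> (2*C1) * rN^2"
      by simp
  qed (use L0 C1 rN P1 in \<open>auto intro!: mult_nonneg_nonneg add_nonneg_nonneg\<close>)
  have lam0: "0 \<le> lam" using lam1 by simp
  have lp2: "lam powr 2 = lam^2" using powr_realpow[of lam 2] lam1 by simp
  have h2: "lP * (1 + lP) \<le> ((A+4)*(A+5)) * lam^2"
  proof -
    have "lP * (1 + lP) \<le> ((A+4) * lam) * (lam + (A+4) * lam)"
      using lP0 lPb lam1 by (intro mult_mono add_mono) auto
    also have "\<dots> = ((A+4)*(A+5)) * lam^2" by (simp add: power2_eq_square algebra_simps)
    finally show ?thesis .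
  qed
  define c where "c = (5*?a+1)*(A+4)"
  have c0: "0 \<le> c" unfolding c_def using A0 by simp
  have h3: "(real J * lP) powr (A/2) \<le> c powr (A/2) * lam powr A"
  proof -
    have "real J * lP \<le> ((5*?a+1) * lam) * ((A+4) * lam)" using Jb lPb lP0 lam0 A0 by (intro mult_mono) auto
    also have "\<dots> = c * lam^2" unfolding c_def by (simp add: power2_eq_square algebra_simps)
    finally have "(real J * lP) powr (A/2) \<le> (c * lam^2) powr (A/2)" using lP0 A0 by (intro powr_mono2) auto
    also have "\<dots> = c powr (A/2) * (lam^2) powr (A/2)" using c0 lam0 by (simp add: powr_mult)
    also have "(lam^2) powr (A/2) = lam powr A" unfolding lp2[symmetric] by (simp add: powr_powr)
    finally show ?thesis .
  qed
  have JJ: "real J * real J \<le> (5*?a+1)^2 * lam^2"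
  proof -
    have "real J * real J \<le> ((5*?a+1) * lam) * ((5*?a+1) * lam)"
      by (rule mult_mono[OF Jb Jb]) (use A0 lam1 in auto)
    then show ?thesis by (simp add: power2_eq_square mult_ac)
  qed
  define Lam where "Lam = lam powr (A+4)"
  have Lam1: "1 \<le> Lam" unfolding Lam_def using lam1 A0 by (intro ge_one_powr_ge_zero) auto
  have Lam2: "lam^2 \<le> Lam" unfolding Lam_def lp2[symmetric] by (rule powr_mono) (use lam1 A0 in auto)
  have Lam4: "lam^2 * lam^2 * lam powr A = Lam" unfolding Lam_def lp2[symmetric]
    by (simp add: powr_add[symmetric] add_ac)
  have T3a: "real J * real J * (sqrt C1 * C1 * (real J * lP) powr (A/2)) * rN * (lP * (1 + lP))
       \<le> ((5*?a+1)^2 * (sqrt C1 * C1 * c powr (A/2)) * ((A+4)*(A+5))) * rN * Lam"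
  proof -
    have "real J * real J * (sqrt C1 * C1 * (real J * lP) powr (A/2)) * rN * (lP * (1 + lP))
       \<le> ((5*?a+1)^2 * lam^2) * (sqrt C1 * C1 * (c powr (A/2) * lam powr A)) * rN * (((A+4)*(A+5)) * lam^2)"
    proof -
      have b: "sqrt C1 * C1 * (real J * lP) powr (A/2) \<le> sqrt C1 * C1 * (c powr (A/2) * lam powr A)"
        by (rule mult_left_mono[OF h3]) (use C1 in auto)
      have a: "real J * real J * (sqrt C1 * C1 * (real J * lP) powr (A/2))
           \<le> ((5*?a+1)^2 * lam^2) * (sqrt C1 * C1 * (c powr (A/2) * lam powr A))"
        by (rule mult_mono[OF JJ b]) (use C1 in auto)
      have cc: "real J * real J * (sqrt C1 * C1 * (real J * lP) powr (A/2)) * rN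
           \<le> ((5*?a+1)^2 * lam^2) * (sqrt C1 * C1 * (c powr (A/2) * lam powr A)) * rN"
        by (rule mult_right_mono[OF a rN])
      show ?thesis
        by (rule mult_mono[OF cc h2]) (use C1 rN lP0 c0 lam0 A0 in \<open>auto intro!: mult_nonneg_nonneg\<close>)
    qed
    also have "\<dots> = ((5*?a+1)^2 * (sqrt C1 * C1 * c powr (A/2)) * ((A+4)*(A+5))) * rN * (lam^2 * lam^2 * lam powr A)"
      by (simp add: mult_ac)
    finally show ?thesis using Lam4 by simp
  qed
  have T2a: "C0 * (C1 * rN * (lP * (1 + lP))) \<le> (C0*C1*((A+4)*(A+5))) * rN * Lam"
  proof -
    have "C0 * (C1 * rN * (lP * (1 + lP))) \<le> C0 * (C1 * rN * (((A+4)*(A+5)) * Lam))"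
      using h2 Lam2 C0 C1 rN A0 by (intro mult_left_mono order_trans[OF h2]) auto
    then show ?thesis by (simp add: mult_ac)
  qed
  have "C1 * rN
     + ((real J * real J * (sqrt C1 * C1 * (real J * lP) powr (A/2)) * rN * (lP * (1 + lP))
         + L * sqrt ((rN / real P + real P * rN / 2^J) * (C1 * rN * L powr A)))
       + (C0 * (C1 * rN * (lP * (1 + lP)))
         + C0 * (L * sqrt (rN / real P * (2 * L * (C1 * rN * L powr A))))))
     \<le> C1 * rN * Lam + ((((5*?a+1)^2 * (sqrt C1 * C1 * c powr (A/2)) * ((A+4)*(A+5))) * rN * Lam
          + sqrt (2*C1) * rN * Lam) + ((C0*C1*((A+4)*(A+5))) * rN * Lam + C0 * (sqrt (2*C1) * rN * Lam)))"
  proof (intro add_mono T3a T2a mult_left_mono C0)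
    have "C1 * rN * 1 \<le> C1 * rN * Lam" by (rule mult_left_mono) (use Lam1 C1 rN in auto)
    then show "C1 * rN \<le> C1 * rN * Lam" by simp
    have s2: "sqrt (2*C1) * rN * 1 \<le> sqrt (2*C1) * rN * Lam" by (rule mult_left_mono) (use Lam1 C1 rN in auto)
    show "L * sqrt ((rN / real P + real P * rN / 2^J) * (C1 * rN * L powr A)) \<le> sqrt (2*C1) * rN * Lam"
      using T3b s2 by (simp add: mult.commute)
    show "L * sqrt (rN / real P * (2 * L * (C1 * rN * L powr A))) \<le> sqrt (2*C1) * rN * Lam"
      using T2b s2 by (simp add: mult.commute)
  qed
  also have "\<dots> = Kc A C0 C1 * rN * Lam" unfolding Kc_def c_def by (simp add: algebra_simps)
  also have "\<dots> \<le> Kc A C0 C1 * rN * (((A+4)/\<epsilon>) powr (A+4) * 7 powr \<epsilon> * L powr \<epsilon>)"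
  proof (intro mult_left_mono)
    show "Lam \<le> ((A+4)/\<epsilon>) powr (A+4) * 7 powr \<epsilon> * L powr \<epsilon>"
      unfolding Lam_def lam_def by (rule lam_bound[OF A0 ep L])
    show "0 \<le> Kc A C0 C1 * rN" unfolding Kc_def using C0 C1 rN A0
      by (intro mult_nonneg_nonneg add_nonneg_nonneg) auto
  qed
  also have "\<dots> = Kf A C0 C1 \<epsilon> * rN * L powr \<epsilon>" unfolding Kf_def by (simp add: mult_ac)
  finally show ?thesis unfolding lP_def .
qed



context setting begin

lemma total: assumes P1: "1 \<le> P" and J1: "1 \<le> J"
  shows "norm (of_real (ln (real N)) * (\<Sum>n\<in>{1..N}. f n * e (g n))
      - (\<Sum>(n,p)\<in>{(n,p). 1 \<le> n \<and> prime p \<and> n*p \<le> N}. f n * f p * of_real (ln (real p)) * e (g (n*p))))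
   \<le> C1 * real N
     + ((real J * real J * (sqrt C1 * C1 * (real J * ln (real P)) powr (A/2)) * real N * (ln (real P) * (1 + ln (real P)))
         + ln (real N) * sqrt ((real N / real P + real P * real N / 2^J) * (C1 * real N * ln (real N) powr A)))
       + (C0 * (C1 * real N * (ln (real P) * (1 + ln (real P))))
         + C0 * (ln (real N) * sqrt (real N / real P * (2 * ln (real N) * (C1 * real N * ln (real N) powr A))))))"
  using decomp[of g] E1[of N] E3bound[OF P1 J1] E2bound[OF P1] N2 by linarith

end

theorem mainTheorem5:
  fixes A C0 C1 \<epsilon> :: real
  assumes "A \<ge> 0" and "C0 > 0" and "C1 > 0" and "\<epsilon> > 0"
  shows "\<exists>K::real. \<forall>(f::nat \<Rightarrow> complex) (g::nat \<Rightarrow> real) (N::nat).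
     multiplicative f \<and>
     (\<forall>p::nat. prime p \<longrightarrow> norm (f p) \<le> C0) \<and>
     (\<forall>X::real. X \<ge> 1 \<longrightarrow> (\<Sum>n\<in>{1..nat \<lfloor>X\<rfloor>}. norm (f n)) \<le> C1 * X) \<and>
     (\<forall>X::real. X \<ge> 2 \<longrightarrow> (\<Sum>n\<in>{1..nat \<lfloor>X\<rfloor>}. (norm (f n))\<^sup>2) \<le> C1 * X * (ln X) powr A) \<and>
     N \<ge> 2
     \<longrightarrow> norm (\<Sum>n\<in>{1..N}. f n * e (g n))
         \<le> K * (real N / (ln (real N)) powr (1 - \<epsilon>)
               + 1 / ln (real N) *
                 norm (\<Sum>(n, p)\<in>{(n, p). 1 \<le> n \<and> prime p \<and> n * p \<le> N}.
                          f n * f p * of_real (ln (real p)) * e (g (n * p))))"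
proof (intro exI[of _ "max 1 (Kf A C0 C1 \<epsilon>)"] allI impI)
  fix f :: "nat \<Rightarrow> complex" and g :: "nat \<Rightarrow> real" and N :: nat
  assume h: "multiplicative f \<and>
     (\<forall>p::nat. prime p \<longrightarrow> norm (f p) \<le> C0) \<and>
     (\<forall>X::real. X \<ge> 1 \<longrightarrow> (\<Sum>n\<in>{1..nat \<lfloor>X\<rfloor>}. norm (f n)) \<le> C1 * X) \<and>
     (\<forall>X::real. X \<ge> 2 \<longrightarrow> (\<Sum>n\<in>{1..nat \<lfloor>X\<rfloor>}. (norm (f n))\<^sup>2) \<le> C1 * X * (ln X) powr A) \<and>
     N \<ge> 2"
  let ?K = "max 1 (Kf A C0 C1 \<epsilon>)"
  let ?S0 = "\<Sum>n\<in>{1..N}. f n * e (g n)"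
  let ?T = "\<Sum>(n, p)\<in>{(n, p). 1 \<le> n \<and> prime p \<and> n * p \<le> N}. f n * f p * of_real (ln (real p)) * e (g (n * p))"
  have H1: "(\<Sum>n\<in>{1..j}. norm (f n)) \<le> C1 * real j" for j
  proof (cases "j = 0")
    case True then show ?thesis by simp
  next
    case False
    have hx: "\<forall>X::real. X \<ge> 1 \<longrightarrow> (\<Sum>n\<in>{1..nat \<lfloor>X\<rfloor>}. norm (f n)) \<le> C1 * X" using h by blast
    have "(\<Sum>n\<in>{1..nat \<lfloor>real j\<rfloor>}. norm (f n)) \<le> C1 * real j"
      by (rule hx[rule_format]) (use False in simp)
    then show ?thesis by simp
  qed
  have H2: "(\<Sum>n\<in>{1..j}. (norm (f n))^2) \<le> C1 * real j * ln (real j) powr A" if "2 \<le> j" for j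
  proof -
    have hx: "\<forall>X::real. X \<ge> 2 \<longrightarrow> (\<Sum>n\<in>{1..nat \<lfloor>X\<rfloor>}. (norm (f n))\<^sup>2) \<le> C1 * X * (ln X) powr A" using h by blast
    have "(\<Sum>n\<in>{1..nat \<lfloor>real j\<rfloor>}. (norm (f n))^2) \<le> C1 * real j * ln (real j) powr A"
      by (rule hx[rule_format]) (use that in simp)
    then show ?thesis by simp
  qed
  interpret setting f C0 C1 A N
    by unfold_locales (use h H1 H2 assms in auto)
  let ?L = "ln (real N)"
  have L23: "2/3 \<le> ?L"
  proof -
    have "ln 2 \<le> ?L" using N2 by simp
    then show ?thesis using ln2_ge_two_thirds by linarith
  qed
  have L0: "0 < ?L" using L23 by linarith
  define P where "P = nat \<lceil>(?L+4) powr (A+3)\<rceil>"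
  define J where "J = nat \<lceil>3*(A+3)*log 2 (?L+4)\<rceil>"
  note F = PJ_facts[OF assms(1) L23 P_def J_def]
  have main: "norm (of_real ?L * ?S0 - ?T) \<le> Kf A C0 C1 \<epsilon> * real N * ?L powr \<epsilon>"
    using total[OF F(4) F(7), of g] asym[OF assms(1) less_imp_le[OF assms(2)] assms(3) assms(4) L23 _ P_def J_def, of "real N"]
    by simp
  have "?L * norm ?S0 = norm (of_real ?L * ?S0)" using L0 by (simp add: norm_mult)
  also have "\<dots> \<le> norm ?T + norm (of_real ?L * ?S0 - ?T)" by (rule norm_triangle_sub)
  finally have "?L * norm ?S0 \<le> norm ?T + Kf A C0 C1 \<epsilon> * real N * ?L powr \<epsilon>" using main by linarith
  then have "norm ?S0 \<le> (norm ?T + Kf A C0 C1 \<epsilon> * real N * ?L powr \<epsilon>) / ?L"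
    using L0 by (simp add: field_simps)
  also have "\<dots> = Kf A C0 C1 \<epsilon> * (real N / ?L powr (1 - \<epsilon>)) + 1 / ?L * norm ?T"
    using L0 by (simp add: powr_diff field_simps)
  also have "\<dots> \<le> ?K * (real N / ?L powr (1 - \<epsilon>)) + ?K * (1 / ?L * norm ?T)"
  proof (rule add_mono)
    show "Kf A C0 C1 \<epsilon> * (real N / ?L powr (1 - \<epsilon>)) \<le> ?K * (real N / ?L powr (1 - \<epsilon>))"
      by (rule mult_right_mono) (use L0 in auto)
    have "1 * (1 / ?L * norm ?T) \<le> ?K * (1 / ?L * norm ?T)"
      by (rule mult_right_mono) (use L0 in auto)
    then show "1 / ?L * norm ?T \<le> ?K * (1 / ?L * norm ?T)" by simp
  qed
  finally show "norm ?S0 \<le> ?K * (real N / ?L powr (1 - \<epsilon>) + 1 / ?L * norm ?T)"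
    by (simp add: distrib_left)
qed


end
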